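(* Let $m\ge2$, $n\ge1$, let $f_i:\mathbb{R}^n\to\mathbb{R}$ be smooth, $F(\boldsymbol\theta)=\sum_{i=1}^m f_i(\boldsymbol\theta_i)$ for $\boldsymbol\theta=[\boldsymbol\theta_1^\top,\dots,\boldsymbol\theta_m^\top]^\top\in\mathbb{R}^{mn}$, and $\mathbf{r}\in\mathbb{R}^n$. Let $\boldsymbol\theta^0\in\mathbb{R}^{mn}$ satisfy $(\mathbf{1}_m^\top\otimes\mathbf{I}_n)\boldsymbol\theta^0=\mathbf{r}$ and let $\alpha>0$. Define the auxiliary function $\Psi_{\boldsymbol\theta^0}(\mathbf{x})=F(\boldsymbol\theta^0+\sqrt{\hat{\mathbf{L}}}\mathbf{x})$ for $\mathbf{x}\in\mathbb{R}^{mn}$. Then the sequence $\{\boldsymbol\theta^k\}$ generated by $\boldsymbol\theta^{k+1}=\boldsymbol\theta^k-\alpha\hat{\mathbf{L}}\nabla F(\boldsymbol\theta^k)$ from $\boldsymbol\theta^0$ coincides with the sequence generated by $$\mathbf{x}^{k+1}=\mathbf{x}^k-\alpha\nabla\Psi_{\boldsymbol\theta^0}(\mathbf{x}^k),\qquad \boldsymbol\theta^{k+1}=\boldsymbol\theta^0+\sqrt{\hat{\mathbf{L}}}\mathbf{x}^{k+1},$$ started from $\mathbf{x}^0=\mathbf{0}$ and the same $\boldsymbol\theta^0$, with the same step-size $\alpha$.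
   Context: $\mathbf{L}$ is the Laplacian matrix of an undirected graph on $\{1,\dots,m\}$ (symmetric positive semidefinite); $\sqrt{\mathbf{L}}$ is its unique symmetric positive semidefinite square root; $\hat{\mathbf{L}}=\mathbf{L}\otimes\mathbf{I}_n$ and $\sqrt{\hat{\mathbf{L}}}=\sqrt{\mathbf{L}}\otimes\mathbf{I}_n$. $\nabla F(\boldsymbol\theta)$ is the stacked vector of $\nabla f_i(\boldsymbol\theta_i)$. *)

theory Defs
  imports "HOL-Analysis.Analysis"
begin

definition undirected_graph :: "('m \<Rightarrow> 'm \<Rightarrow> bool) \<Rightarrow> bool" where
  "undirected_graph E \<longleftrightarrow> (\<forall>i j. E i j \<longrightarrow> E j i) \<and> (\<forall>i. \<not> E i i)"

definition laplacian :: "('m::finite \<Rightarrow> 'm \<Rightarrow> bool) \<Rightarrow> real^'m^'m" where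
  "laplacian E = (\<chi> i j. if i = j then real (card {k. k \<noteq> i \<and> E i k})
                          else if E i j then -1 else 0)"

definition psd :: "real^'m^'m \<Rightarrow> bool" where
  "psd S \<longleftrightarrow> transpose S = S \<and> (\<forall>v. 0 \<le> v \<bullet> (S *v v))"

text \<open>Kronecker action (A \<otimes> I_n) on stacked vectors theta = [theta_1; ...; theta_m],
with blocks theta $ i in R^n.\<close>
definition kron_I :: "real^'m^'m \<Rightarrow> (real^'n)^'m \<Rightarrow> (real^'n)^'m" where
  "kron_I A th = (\<chi> i. \<Sum>j\<in>UNIV. A $ i $ j *\<^sub>R th $ j)"

definition grad :: "('a::real_inner \<Rightarrow> real) \<Rightarrow> 'a \<Rightarrow> 'a" where
  "grad f x = (THE g. (f has_derivative (\<lambda>h. g \<bullet> h)) (at x))"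

text \<open>Smooth (C-infinity) functions: all iterated Frechet derivatives exist everywhere;
D vs x is the iterated derivative in directions vs evaluated at x.\<close>
definition smooth :: "('a::real_normed_vector \<Rightarrow> real) \<Rightarrow> bool" where
  "smooth f \<longleftrightarrow> (\<exists>D :: 'a list \<Rightarrow> 'a \<Rightarrow> real. D [] = f \<and>
      (\<forall>vs x. (D vs has_derivative (\<lambda>h. D (h # vs) x)) (at x)))"

definition sepF :: "('m::finite \<Rightarrow> real^'n \<Rightarrow> real) \<Rightarrow> (real^'n)^'m \<Rightarrow> real" where
  "sepF f th = (\<Sum>i\<in>UNIV. f i (th $ i))"

definition gradF :: "('m::finite \<Rightarrow> real^'n \<Rightarrow> real) \<Rightarrow> (real^'n)^'m \<Rightarrow> (real^'n)^'m" where
  "gradF f th = (\<chi> i. grad (f i) (th $ i))"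

end

theory Submission
  imports Defs
begin

lemma grad_eq:
  fixes f :: "'a::euclidean_space \<Rightarrow> real"
  assumes "(f has_derivative (\<lambda>h. g \<bullet> h)) (at x)"
  shows "grad f x = g"
  unfolding grad_def
proof (rule the_equality)
  show "(f has_derivative (\<lambda>h. g \<bullet> h)) (at x)" by fact
  fix g' assume "(f has_derivative (\<lambda>h. g' \<bullet> h)) (at x)"
  then have "(\<lambda>h. g' \<bullet> h) = (\<lambda>h. g \<bullet> h)" using assms has_derivative_unique by blast
  then have "g' \<bullet> (g' - g) = g \<bullet> (g' - g)" by metis
  then have "(g' - g) \<bullet> (g' - g) = 0" by (simp add: inner_diff_left)
  then show "g' = g" by simp
qed

lemma linear_repr:
  fixes L :: "'a::euclidean_space \<Rightarrow> real"
  assumes "linear L"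
  shows "L = (\<lambda>h. (\<Sum>b\<in>Basis. L b *\<^sub>R b) \<bullet> h)"
proof
  fix h
  have "L h = L (\<Sum>b\<in>Basis. (h \<bullet> b) *\<^sub>R b)" by (simp add: euclidean_representation)
  also have "\<dots> = (\<Sum>b\<in>Basis. (h \<bullet> b) * L b)"
    using assms by (simp add: linear_sum linear_scale)
  also have "\<dots> = (\<Sum>b\<in>Basis. L b *\<^sub>R b) \<bullet> h"
    by (auto simp: inner_sum_right intro!: sum.cong simp: inner_commute)
  finally show "L h = (\<Sum>b\<in>Basis. L b *\<^sub>R b) \<bullet> h" .
qed

lemma smooth_grad:
  fixes f :: "'a::euclidean_space \<Rightarrow> real"
  assumes "smooth f"
  shows "(f has_derivative (\<lambda>h. grad f x \<bullet> h)) (at x)"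
proof -
  obtain D where D: "D [] = f" "\<And>vs x. (D vs has_derivative (\<lambda>h. D (h # vs) x)) (at x)"
    using assms unfolding smooth_def by blast
  have d: "(f has_derivative (\<lambda>h. D [h] x)) (at x)" using D by metis
  then have "linear (\<lambda>h. D [h] x)" using has_derivative_linear by blast
  then have "(\<lambda>h. D [h] x) = (\<lambda>h. (\<Sum>b\<in>Basis. D [b] x *\<^sub>R b) \<bullet> h)" by (rule linear_repr)
  with d have d2: "(f has_derivative (\<lambda>h. (\<Sum>b\<in>Basis. D [b] x *\<^sub>R b) \<bullet> h)) (at x)" by simp
  then have "grad f x = (\<Sum>b\<in>Basis. D [b] x *\<^sub>R b)" by (rule grad_eq)
  with d2 show ?thesis by simp
qed

lemma kron_I_add: "kron_I A (u + v) = kron_I A u + kron_I A v"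
  unfolding kron_I_def by (simp add: vec_eq_iff scaleR_add_right sum.distrib)
lemma kron_I_diff: "kron_I A (u - v) = kron_I A u - kron_I A v"
  unfolding kron_I_def by (simp add: vec_eq_iff scaleR_diff_right sum_subtractf)
lemma kron_I_scale: "kron_I A (c *\<^sub>R u) = c *\<^sub>R kron_I A u"
  unfolding kron_I_def by (simp add: vec_eq_iff scaleR_sum_right mult_ac)
lemma kron_I_zero: "kron_I A 0 = 0"
  unfolding kron_I_def by (simp add: vec_eq_iff)

lemma kron_I_bl: "bounded_linear (kron_I A)"
  by (rule linear_conv_bounded_linear[THEN iffD1], rule linearI) (simp_all add: kron_I_add kron_I_scale)

lemma kron_I_mult: "kron_I (A ** B) v = kron_I A (kron_I B v)"
  unfolding kron_I_def matrix_matrix_mult_def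
  apply (simp add: vec_eq_iff scaleR_sum_right scaleR_sum_left sum_component)
  apply (intro allI)
  apply (rule trans[OF sum.swap])
  apply (simp add: mult_ac)
  done

lemma kron_I_inner:
  fixes g h :: "(real^'n::finite)^'m::finite"
  shows "kron_I A g \<bullet> h = g \<bullet> kron_I (transpose A) h"
proof -
  have "kron_I A g \<bullet> h = (\<Sum>i\<in>UNIV. (\<Sum>j\<in>UNIV. A$i$j * (g$j \<bullet> h$i)))"
    by (simp only: inner_vec_def[of "kron_I A g" h]) (simp add: kron_I_def inner_sum_left)
  also have "\<dots> = (\<Sum>j\<in>UNIV. (\<Sum>i\<in>UNIV. A$i$j * (g$j \<bullet> h$i)))"
    by (rule sum.swap)
  also have "\<dots> = g \<bullet> kron_I (transpose A) h"
    by (simp only: inner_vec_def[of g "kron_I (transpose A) h"])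
       (simp add: kron_I_def inner_sum_right transpose_def)
  finally show ?thesis .
qed

lemma sepF_deriv:
  fixes f :: "'m::finite \<Rightarrow> real^'n::finite \<Rightarrow> real"
  assumes "\<And>i. smooth (f i)"
  shows "(sepF f has_derivative (\<lambda>h. gradF f z \<bullet> h)) (at z)"
proof -
  have "((\<lambda>th. \<Sum>i\<in>UNIV. f i (th $ i)) has_derivative
          (\<lambda>h. \<Sum>i\<in>UNIV. grad (f i) (z $ i) \<bullet> (h $ i))) (at z)"
  proof (rule has_derivative_sum)
    fix i :: 'm
    have c: "((\<lambda>th. th $ i) has_derivative (\<lambda>h. h $ i)) (at z)"
      by (rule bounded_linear_imp_has_derivative) (rule bounded_linear_vec_nth)
    show "((\<lambda>th. f i (th $ i)) has_derivative (\<lambda>h. grad (f i) (z $ i) \<bullet> (h $ i))) (at z)"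
      using has_derivative_compose[OF c smooth_grad[OF assms[of i], of "z $ i"]] by simp
  qed
  then show ?thesis unfolding sepF_def gradF_def inner_vec_def by simp
qed


theorem proposition1:
  fixes E :: "'m::finite \<Rightarrow> 'm \<Rightarrow> bool"
    and S :: "real^'m^'m"
    and f :: "'m \<Rightarrow> real^'n::finite \<Rightarrow> real"
    and r :: "real^'n"
    and th0 :: "(real^'n)^'m"
    and \<alpha> :: real
    and th th' x :: "nat \<Rightarrow> (real^'n)^'m"
  assumes m2: "CARD('m) \<ge> 2"
    and graph: "undirected_graph E"
    and sqrtL: "psd S" "S ** S = laplacian E"
    and smooth: "\<And>i. smooth (f i)"
    and cons: "(\<Sum>i\<in>UNIV. th0 $ i) = r"
    and alpha: "\<alpha> > 0"
    and th_0: "th 0 = th0"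
    and th_step: "\<And>k. th (Suc k) = th k - \<alpha> *\<^sub>R kron_I (laplacian E) (gradF f (th k))"
    and x_0: "x 0 = 0"
    and x_step: "\<And>k. x (Suc k) = x k - \<alpha> *\<^sub>R grad (\<lambda>y. sepF f (th0 + kron_I S y)) (x k)"
    and th'_0: "th' 0 = th0"
    and th'_step: "\<And>k. th' (Suc k) = th0 + kron_I S (x (Suc k))"
  shows "\<forall>k. th k = th' k"
proof -
  have psi: "grad (\<lambda>y. sepF f (th0 + kron_I S y)) y = kron_I S (gradF f (th0 + kron_I S y))" for y
  proof (rule grad_eq)
    have a: "((\<lambda>y. th0 + kron_I S y) has_derivative kron_I S) (at y)"
      using has_derivative_add[OF has_derivative_const bounded_linear_imp_has_derivative[OF kron_I_bl]]
      by simp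
    have "((\<lambda>y. sepF f (th0 + kron_I S y)) has_derivative
        (\<lambda>h. gradF f (th0 + kron_I S y) \<bullet> kron_I S h)) (at y)"
      using has_derivative_compose[OF a sepF_deriv[OF smooth]] by simp
    moreover have "transpose S = S" using sqrtL(1) unfolding psd_def by simp
    ultimately show "((\<lambda>y. sepF f (th0 + kron_I S y)) has_derivative
        (\<lambda>h. kron_I S (gradF f (th0 + kron_I S y)) \<bullet> h)) (at y)"
      by (simp add: kron_I_inner)
  qed
  have main: "th k = th0 + kron_I S (x k)" for k
  proof (induction k)
    case 0 then show ?case by (simp add: th_0 x_0 kron_I_zero)
  next
    case (Suc k)
    show ?case
      by (simp add: th_step x_step Suc psi kron_I_diff kron_I_scale
          kron_I_mult[symmetric] sqrtL(2))
  qed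
  show ?thesis
  proof
    fix k show "th k = th' k"
      by (cases k) (simp_all add: main th'_0 th'_step th_0 x_0 kron_I_zero)
  qed
qed

end
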